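(* $18,19\notin\operatorname{Spec}(32_{65})$.
   Context: $32_{65}$ is the finite integral symmetric relation algebra with atoms $1'$, $a$, $b$, $c$, all symmetric, in which a diversity cycle $xyz$ (with $x,y,z\in\{a,b,c\}$) is mandatory (i.e. $x;y\ge z$) if it involves $a$ and forbidden (i.e. $x;y\cdot z=0$) otherwise. A representation over a set $U$ is an embedding into the full relation algebra on $U\times U$. $\operatorname{Spec}(A)$ is the set of cardinals $\alpha\le\omega$ such that $A$ has a representation over a set of cardinality $\alpha$. *)

theory Defs
  imports Main
begin

text \<open>Elements are
  sets of atoms; Boolean operations are the set operations; converse is the identity
  (all atoms symmetric); composition is the union of the atom compositions.\<close>

datatype atom = One | Aa | Bb | Cc

definition diversity :: "atom set" where
  "diversity = {Aa, Bb, Cc}"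

text \<open>Composition of atoms: a diversity cycle xyz is mandatory iff it involves a,
  forbidden otherwise; x;x contains 1' for diversity x (symmetric atoms).\<close>
definition atom_comp :: "atom \<Rightarrow> atom \<Rightarrow> atom set" where
  "atom_comp x y =
     (if x = One then {y}
      else if y = One then {x}
      else (if x = y then {One} else {}) \<union> {z \<in> diversity. Aa \<in> {x, y, z}})"

definition ra_comp :: "atom set \<Rightarrow> atom set \<Rightarrow> atom set" where
  "ra_comp X Y = (\<Union>x\<in>X. \<Union>y\<in>Y. atom_comp x y)"

definition ra_conv :: "atom set \<Rightarrow> atom set" where
  "ra_conv X = X"

definition representation :: "'u set \<Rightarrow> (atom set \<Rightarrow> ('u \<times> 'u) set) \<Rightarrow> bool" where
  "representation U f \<longleftrightarrow>
     inj f \<and>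
     (\<forall>X Y. f (X \<union> Y) = f X \<union> f Y) \<and>
     (\<forall>X. f (- X) = (U \<times> U) - f X) \<and>
     f {One} = Id_on U \<and>
     (\<forall>X. f (ra_conv X) = converse (f X)) \<and>
     (\<forall>X Y. f (ra_comp X Y) = f X O f Y)"

end

theory Submission
  imports Defs
begin

lemma rep_D:
  assumes "representation U f"
  shows "inj f" "\<And>X Y. f (X \<union> Y) = f X \<union> f Y" "\<And>X. f (- X) = (U \<times> U) - f X"
    "f {One} = Id_on U" "\<And>X. f X = converse (f X)" "\<And>X Y. f (ra_comp X Y) = f X O f Y"
  using assms unfolding representation_def ra_conv_def by auto

lemma rep_mono:
  assumes "representation U f" "X \<subseteq> Y"
  shows "f X \<subseteq> f Y"
proof -
  have "Y = X \<union> Y" using assms(2) by blast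
  then have "f Y = f X \<union> f Y" using rep_D[OF assms(1)] by metis
  then show ?thesis by blast
qed

lemma rep_univ:
  assumes "representation U f"
  shows "f UNIV = U \<times> U"
proof -
  have "(UNIV :: atom set) = {One} \<union> - {One}" by blast
  then have "f UNIV = f {One} \<union> f (- {One})" using rep_D[OF assms] by metis
  also have "\<dots> = Id_on U \<union> (U \<times> U - Id_on U)" using rep_D[OF assms] by metis
  also have "\<dots> = U \<times> U" by (auto simp: Id_on_def)
  finally show ?thesis .
qed

lemma rep_sub:
  assumes "representation U f"
  shows "f X \<subseteq> U \<times> U"
  using rep_mono[OF assms, of X UNIV] rep_univ[OF assms] by simp

lemma rep_disj:
  assumes "representation U f" "z \<notin> S" "p \<in> f {z}"
  shows "p \<notin> f S"
proof -
  have "{z} \<subseteq> - S" using assms(2) by blast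
  then have "f {z} \<subseteq> f (- S)" using rep_mono[OF assms(1)] by blast
  also have "\<dots> = U \<times> U - f S" using rep_D[OF assms(1)] by metis
  finally show ?thesis using assms(3) by blast
qed

lemma rep_comp:
  assumes "representation U f"
  shows "f (atom_comp p q) = f {p} O f {q}"
proof -
  have "ra_comp {p} {q} = atom_comp p q" by (simp add: ra_comp_def)
  then show ?thesis using rep_D[OF assms] by metis
qed

lemma rep_mand:
  assumes "representation U f" "z \<in> atom_comp p q" "(u,v) \<in> f {z}"
  shows "\<exists>w. (u,w) \<in> f {p} \<and> (w,v) \<in> f {q}"
proof -
  have "f {z} \<subseteq> f (atom_comp p q)" using rep_mono[OF assms(1)] assms(2) by blast
  then show ?thesis using assms(3) rep_comp[OF assms(1)] by blast
qed

lemma rep_forb: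
  assumes "representation U f" "z \<notin> atom_comp p q" "(u,w) \<in> f {p}" "(w,v) \<in> f {q}"
  shows "(u,v) \<notin> f {z}"
proof
  assume h: "(u,v) \<in> f {z}"
  have "(u,v) \<in> f (atom_comp p q)" using assms(3,4) rep_comp[OF assms(1)] by blast
  then show False using rep_disj[OF assms(1) assms(2) h] by blast
qed

lemma rep_sym:
  assumes "representation U f" "(u,v) \<in> f X"
  shows "(v,u) \<in> f X"
proof -
  have "f X = converse (f X)" using rep_D[OF assms(1)] by metis
  then show ?thesis using assms(2) by blast
qed

lemma rep_irr:
  assumes "representation U f" "z \<noteq> One"
  shows "(u,u) \<notin> f {z}"
proof
  assume h: "(u,u) \<in> f {z}"
  then have "u \<in> U" using rep_sub[OF assms(1)] by blast
  then have "(u,u) \<in> f {One}" using rep_D(4)[OF assms(1)] by (simp add: Id_on_def)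
  then show False using rep_disj[OF assms(1), of z "{One}"] h assms(2) by blast
qed

lemma rep_cover:
  assumes "representation U f" "u \<in> U" "v \<in> U" "u \<noteq> v"
  shows "(u,v) \<in> f {Aa} \<union> f {Bb} \<union> f {Cc}"
proof -
  have "(UNIV :: atom set) = {One} \<union> {Aa} \<union> {Bb} \<union> {Cc}" using atom.exhaust by blast
  then have "f UNIV = f {One} \<union> f {Aa} \<union> f {Bb} \<union> f {Cc}"
    using rep_D[OF assms(1)] by metis
  moreover have "f {One} = Id_on U" using rep_D[OF assms(1)] by metis
  moreover have "(u,v) \<notin> Id_on U" using assms(4) by (simp add: Id_on_def)
  ultimately show ?thesis using rep_univ[OF assms(1)] assms(2,3) by blast
qed

lemma rep_ne:
  assumes "representation U f"
  shows "f {Bb} \<noteq> {}"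
proof
  assume h: "f {Bb} = {}"
  have "f {} = f (- UNIV)" by simp
  also have "\<dots> = U \<times> U - f UNIV" using rep_D[OF assms] by metis
  finally have "f {} = {}" using rep_univ[OF assms] by simp
  then have "f {Bb} = f {}" using h by simp
  then have "{Bb} = {}" using rep_D(1)[OF assms] unfolding inj_def by blast
  then show False by simp
qed


lemma comb_bound:
  fixes U :: "'u set" and a b c :: "('u \<times> 'u) set"
  assumes fin: "finite U"
    and subb: "b \<subseteq> U \<times> U" and subc: "c \<subseteq> U \<times> U" and suba: "a \<subseteq> U \<times> U"
    and symb: "\<And>u v. (u,v) \<in> b \<Longrightarrow> (v,u) \<in> b"
    and symc: "\<And>u v. (u,v) \<in> c \<Longrightarrow> (v,u) \<in> c"
    and irra: "\<And>u. (u,u) \<notin> a" and irrb: "\<And>u. (u,u) \<notin> b" and irrc: "\<And>u. (u,u) \<notin> c"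
    and dab: "\<And>u v. (u,v) \<in> a \<Longrightarrow> (u,v) \<notin> b"
    and dac: "\<And>u v. (u,v) \<in> a \<Longrightarrow> (u,v) \<notin> c"
    and dbc: "\<And>u v. (u,v) \<in> b \<Longrightarrow> (u,v) \<notin> c"
    and cover: "\<And>u v. u \<in> U \<Longrightarrow> v \<in> U \<Longrightarrow> u \<noteq> v \<Longrightarrow> (u,v) \<in> a \<union> b \<union> c"
    and tri: "\<And>u v w. (u,v) \<in> b \<union> c \<Longrightarrow> (v,w) \<in> b \<union> c \<Longrightarrow> (u,w) \<notin> b \<union> c"
    and pbb: "\<And>u v. (u,v) \<in> a \<Longrightarrow> \<exists>w. (u,w) \<in> b \<and> (w,v) \<in> b"
    and pbc: "\<And>u v. (u,v) \<in> a \<Longrightarrow> \<exists>w. (u,w) \<in> b \<and> (w,v) \<in> c"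
    and pcb: "\<And>u v. (u,v) \<in> a \<Longrightarrow> \<exists>w. (u,w) \<in> c \<and> (w,v) \<in> b"
    and pcc: "\<And>u v. (u,v) \<in> a \<Longrightarrow> \<exists>w. (u,w) \<in> c \<and> (w,v) \<in> c"
    and pab: "\<And>u v. (u,v) \<in> a \<Longrightarrow> \<exists>w. (u,w) \<in> a \<and> (w,v) \<in> b"
    and edge: "\<And>u v. (u,v) \<in> b \<union> c \<Longrightarrow> \<exists>w. (u,w) \<in> a \<and> (w,v) \<in> b"
    and ne: "b \<noteq> {}"
  shows "20 \<le> card U"
proof -
  define E where "E = b \<union> c"
  define N where "N x = {v \<in> U. (x,v) \<in> E}" for x
  have symE: "(v,u) \<in> E" if "(u,v) \<in> E" for u v using that symb symc unfolding E_def by blast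
  have triE: "(u,w) \<notin> E" if "(u,v) \<in> E" "(v,w) \<in> E" for u v w using tri that unfolding E_def by blast
  have irrE: "(u,u) \<notin> E" for u using irrb irrc unfolding E_def by blast
  have aE: "(u,v) \<notin> E" if "(u,v) \<in> a" for u v using that dab dac unfolding E_def by blast
  have aU: "u \<in> U \<and> v \<in> U" if "(u,v) \<in> a" for u v using that suba by blast
  have EU: "u \<in> U \<and> v \<in> U" if "(u,v) \<in> E" for u v using that subb subc unfolding E_def by blast
  have toa: "(u,v) \<in> a" if "u \<in> U" "v \<in> U" "u \<noteq> v" "(u,v) \<notin> E" for u v
    using cover[OF that(1-3)] that(4) unfolding E_def by blast
  have finN: "finite (N x)" for x using fin unfolding N_def by simp
  have common4: "4 \<le> card (N u \<inter> N v)" if uv: "(u,v) \<in> a" for u v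
  proof -
    obtain w1 where w1: "(u,w1) \<in> b" "(w1,v) \<in> b" using pbb[OF uv] by blast
    obtain w2 where w2: "(u,w2) \<in> b" "(w2,v) \<in> c" using pbc[OF uv] by blast
    obtain w3 where w3: "(u,w3) \<in> c" "(w3,v) \<in> b" using pcb[OF uv] by blast
    obtain w4 where w4: "(u,w4) \<in> c" "(w4,v) \<in> c" using pcc[OF uv] by blast
    have d: "w1 \<noteq> w2" "w1 \<noteq> w3" "w1 \<noteq> w4" "w2 \<noteq> w3" "w2 \<noteq> w4" "w3 \<noteq> w4"
      using w1 w2 w3 w4 dbc by metis+
    have "{w1,w2,w3,w4} \<subseteq> N u \<inter> N v"
      using w1 w2 w3 w4 symb symc subb subc unfolding N_def E_def by blast
    moreover have "card {w1,w2,w3,w4} = 4" using d by simp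
    ultimately show ?thesis using card_mono[OF _ \<open>{w1,w2,w3,w4} \<subseteq> N u \<inter> N v\<close>] finN by simp
  qed
  have common3: "3 \<le> card (N u \<inter> N v - {t})" if "(u,v) \<in> a" for u v t
  proof -
    have "finite (N u \<inter> N v)" using finN by blast
    then have "card (N u \<inter> N v) \<le> card (N u \<inter> N v - {t}) + 1"
    proof (cases "t \<in> N u \<inter> N v")
      case True
      then have "0 < card (N u \<inter> N v)" using \<open>finite (N u \<inter> N v)\<close> card_gt_0_iff by blast
      then show ?thesis using True \<open>finite (N u \<inter> N v)\<close> by (simp add: card_Diff_singleton_if)
    qed simp
    then show ?thesis using common4[OF that] by simp
  qed
  have deg7: "7 \<le> card (N x - {y})" if xy: "(x,y) \<in> E" for x y
  proof -
    obtain q where q: "(x,q) \<in> a" "(q,y) \<in> b" using edge xy unfolding E_def by blast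
    obtain w where w: "(x,w) \<in> a" "(w,q) \<in> b" using pab[OF q(1)] by blast
    have qy: "(q,y) \<in> E" using q unfolding E_def by blast
    have wq: "(w,q) \<in> E" using w unfolding E_def by blast
    have wy: "(w,y) \<notin> E" using triE[OF wq qy] .
    define S where "S = N x \<inter> N w"
    define T where "T = N x \<inter> N q - {y}"
    have cS: "4 \<le> card S" using common4[OF w(1)] unfolding S_def .
    have cT: "3 \<le> card T" using common3[OF q(1)] unfolding T_def .
    have "S \<inter> T = {}"
    proof (rule ccontr)
      assume "S \<inter> T \<noteq> {}"
      then obtain s where "s \<in> N w" "s \<in> N q" unfolding S_def T_def by blast
      then have "(w,s) \<in> E" "(s,q) \<in> E" unfolding N_def using symE by blast+
      then show False using triE wq by blast
    qed
    moreover have "S \<union> T \<subseteq> N x - {y}"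
    proof -
      have "y \<notin> S" using wy symE unfolding S_def N_def by blast
      then show ?thesis unfolding S_def T_def by blast
    qed
    ultimately have "card S + card T \<le> card (N x - {y})"
      using finN card_Un_disjoint[of S T] card_mono[of "N x - {y}" "S \<union> T"]
      unfolding S_def T_def by (metis finite_Diff finite_Int)
    then show ?thesis using cS cT by simp
  qed
  obtain x y where xyb: "(x,y) \<in> b" using ne by auto
  have xy: "(x,y) \<in> E" using xyb unfolding E_def by blast
  define P where "P = N x - {y}"
  have cP: "7 \<le> card P" using deg7[OF xy] unfolding P_def .
  then obtain z where zP: "z \<in> P" by (metis all_not_in_conv card.empty not_numeral_le_zero)
  have xz: "(x,z) \<in> E" using zP unfolding P_def N_def by blast
  have zx: "(z,x) \<in> E" using symE[OF xz] .
  have zy: "(z,y) \<notin> E" using triE[OF zx xy] .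
  have yz: "(y,z) \<in> a" using toa[of y z] zy symE EU[OF xy] EU[OF xz] zP unfolding P_def by blast
  obtain w where w: "(y,w) \<in> a" "(w,z) \<in> b" using pab[OF yz] by blast
  have wz: "(w,z) \<in> E" using w unfolding E_def by blast
  have wx: "(w,x) \<notin> E" using triE[OF wz zx] .
  define S where "S = N y \<inter> N w"
  have cS: "4 \<le> card S" using common4[OF w(1)] unfolding S_def .
  define R where "R = N z - {x}"
  have cR: "7 \<le> card R" using deg7[OF zx] unfolding R_def .
  have xyne: "x \<noteq> y" using xy irrE by blast
  have d1: "{x,y} \<inter> P = {}" using irrE unfolding P_def N_def by blast
  have d2: "({x,y} \<union> P) \<inter> S = {}"
  proof -
    have "x \<notin> S" using wx symE unfolding S_def N_def by blast
    moreover have "y \<notin> S" using irrE unfolding S_def N_def by blast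
    moreover have "P \<inter> S = {}" using triE symE xy unfolding P_def S_def N_def by blast
    ultimately show ?thesis by blast
  qed
  have d3: "({x,y} \<union> P \<union> S) \<inter> R = {}"
  proof -
    have "x \<notin> R" unfolding R_def by blast
    moreover have "y \<notin> R" using zy unfolding R_def N_def by blast
    moreover have "P \<inter> R = {}" using triE symE xz unfolding P_def R_def N_def by blast
    moreover have "S \<inter> R = {}" using triE symE wz unfolding S_def R_def N_def by blast
    ultimately show ?thesis by blast
  qed
  have fP: "finite P" "finite S" "finite R" using finN unfolding P_def S_def R_def by auto
  have "card ({x,y} \<union> P \<union> S \<union> R) = 2 + card P + card S + card R"
    using d1 d2 d3 fP xyne by (simp add: card_Un_disjoint)
  moreover have "{x,y} \<union> P \<union> S \<union> R \<subseteq> U"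
    using EU[OF xy] unfolding P_def S_def R_def N_def by blast
  ultimately have "2 + card P + card S + card R \<le> card U" using card_mono[OF fin] by metis
  then show ?thesis using cP cS cR by simp
qed

theorem mainTheorem12:
  fixes U :: "'u set"
  assumes "finite U" and "card U = 18 \<or> card U = 19"
  shows "\<not> (\<exists>f. representation U f)"
proof
  assume "\<exists>f. representation U f"
  then obtain f where r: "representation U f" by blast
  have ac: "Aa \<in> atom_comp p q" if "p \<noteq> One" "q \<noteq> One" for p q
    using that by (cases p; cases q) (auto simp: atom_comp_def diversity_def)
  have nb: "Bb \<notin> atom_comp p q" "Cc \<notin> atom_comp p q" if "p \<in> {Bb,Cc}" "q \<in> {Bb,Cc}" for p q
    using that by (auto simp: atom_comp_def diversity_def)
  have tri: "(u,w) \<notin> f {Bb} \<union> f {Cc}"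
    if h1: "(u,v) \<in> f {Bb} \<union> f {Cc}" and h2: "(v,w) \<in> f {Bb} \<union> f {Cc}" for u v w
  proof -
    obtain p where p: "p \<in> {Bb,Cc}" "(u,v) \<in> f {p}" using h1 by blast
    obtain q where q: "q \<in> {Bb,Cc}" "(v,w) \<in> f {q}" using h2 by blast
    show ?thesis using rep_forb[OF r nb(1)[OF p(1) q(1)] p(2) q(2)]
      rep_forb[OF r nb(2)[OF p(1) q(1)] p(2) q(2)] by blast
  qed
  have edge: "\<exists>w. (u,w) \<in> f {Aa} \<and> (w,v) \<in> f {Bb}" if "(u,v) \<in> f {Bb} \<union> f {Cc}" for u v
  proof -
    have "Bb \<in> atom_comp Aa Bb" "Cc \<in> atom_comp Aa Bb" by (auto simp: atom_comp_def diversity_def)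
    then show ?thesis using that rep_mand[OF r, of Bb Aa Bb] rep_mand[OF r, of Cc Aa Bb] by blast
  qed
  have "20 \<le> card U"
  proof (rule comb_bound[of U "f {Bb}" "f {Cc}" "f {Aa}"])
    show "finite U" by fact
    show "f {Bb} \<subseteq> U \<times> U" "f {Cc} \<subseteq> U \<times> U" "f {Aa} \<subseteq> U \<times> U" using rep_sub[OF r] by auto
    show "\<And>u v. (u,v) \<in> f {Bb} \<Longrightarrow> (v,u) \<in> f {Bb}" "\<And>u v. (u,v) \<in> f {Cc} \<Longrightarrow> (v,u) \<in> f {Cc}"
      using rep_sym[OF r] by auto
    show "\<And>u. (u,u) \<notin> f {Aa}" "\<And>u. (u,u) \<notin> f {Bb}" "\<And>u. (u,u) \<notin> f {Cc}"
      using rep_irr[OF r, of Aa] rep_irr[OF r, of Bb] rep_irr[OF r, of Cc] by auto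
    show "\<And>u v. (u,v) \<in> f {Aa} \<Longrightarrow> (u,v) \<notin> f {Bb}" "\<And>u v. (u,v) \<in> f {Aa} \<Longrightarrow> (u,v) \<notin> f {Cc}"
      "\<And>u v. (u,v) \<in> f {Bb} \<Longrightarrow> (u,v) \<notin> f {Cc}"
      using rep_disj[OF r, of Aa "{Bb}"] rep_disj[OF r, of Aa "{Cc}"] rep_disj[OF r, of Bb "{Cc}"] by auto
    show "\<And>u v. u \<in> U \<Longrightarrow> v \<in> U \<Longrightarrow> u \<noteq> v \<Longrightarrow> (u,v) \<in> f {Aa} \<union> f {Bb} \<union> f {Cc}"
      using rep_cover[OF r] by blast
    show "\<And>u v w. (u,v) \<in> f {Bb} \<union> f {Cc} \<Longrightarrow> (v,w) \<in> f {Bb} \<union> f {Cc} \<Longrightarrow> (u,w) \<notin> f {Bb} \<union> f {Cc}"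
      using tri by blast
    show "\<And>u v. (u,v) \<in> f {Aa} \<Longrightarrow> \<exists>w. (u,w) \<in> f {Bb} \<and> (w,v) \<in> f {Bb}"
      using rep_mand[OF r ac[of Bb Bb]] by simp
    show "\<And>u v. (u,v) \<in> f {Aa} \<Longrightarrow> \<exists>w. (u,w) \<in> f {Bb} \<and> (w,v) \<in> f {Cc}"
      using rep_mand[OF r ac[of Bb Cc]] by simp
    show "\<And>u v. (u,v) \<in> f {Aa} \<Longrightarrow> \<exists>w. (u,w) \<in> f {Cc} \<and> (w,v) \<in> f {Bb}"
      using rep_mand[OF r ac[of Cc Bb]] by simp
    show "\<And>u v. (u,v) \<in> f {Aa} \<Longrightarrow> \<exists>w. (u,w) \<in> f {Cc} \<and> (w,v) \<in> f {Cc}"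
      using rep_mand[OF r ac[of Cc Cc]] by simp
    show "\<And>u v. (u,v) \<in> f {Aa} \<Longrightarrow> \<exists>w. (u,w) \<in> f {Aa} \<and> (w,v) \<in> f {Bb}"
      using rep_mand[OF r ac[of Aa Bb]] by simp
    show "\<And>u v. (u,v) \<in> f {Bb} \<union> f {Cc} \<Longrightarrow> \<exists>w. (u,w) \<in> f {Aa} \<and> (w,v) \<in> f {Bb}"
      using edge by blast
    show "f {Bb} \<noteq> {}" using rep_ne[OF r] .
  qed
  then show False using assms(2) by simp
qed

end
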